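(* The Nielsen–Schreier theorem — "for every set $A$ and every subgroup $H$ of the free group $F_A$ on $A$, there exists a subset of $H$ that freely generates $H$" — is false in the internal logic of the topos of nominal sets.
   Context: Work in a classical metatheory. Fix a countably infinite set $\mathbb{A}$ and let $\mathrm{Perm}(\mathbb{A})$ be the group of finitely supported permutations of $\mathbb{A}$ (bijections $\pi$ with $\pi(a)=a$ for all but finitely many $a$). For a $\mathrm{Perm}(\mathbb{A})$-set $(X,\cdot)$, a subset $S\subseteq\mathbb{A}$ supports $x\in X$ if $\pi\cdot x = x$ for every $\pi$ fixing all elements of $S$. The topos of nominal sets is the full subcategory of $\mathrm{Perm}(\mathbb{A})$-sets in which every element has a finite support. Free groups are understood in the usual sense (reduced words); a subset freely generates a group if the induced homomorphism from the free group on that subset is an isomorphism. *)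

theory Defs
  imports "HOL-Algebra.Group" "HOL-Algebra.Generated_Groups"
begin

type_synonym atom = nat

definition fsperm :: "(atom \<Rightarrow> atom) \<Rightarrow> bool" where
  "fsperm \<pi> \<longleftrightarrow> bij \<pi> \<and> finite {a. \<pi> a \<noteq> a}"

definition perm_set :: "'x set \<Rightarrow> ((atom \<Rightarrow> atom) \<Rightarrow> 'x \<Rightarrow> 'x) \<Rightarrow> bool" where
  "perm_set X act \<longleftrightarrow>
     (\<forall>\<pi> x. fsperm \<pi> \<and> x \<in> X \<longrightarrow> act \<pi> x \<in> X) \<and>
     (\<forall>x\<in>X. act id x = x) \<and>
     (\<forall>\<pi> \<sigma> x. fsperm \<pi> \<and> fsperm \<sigma> \<and> x \<in> X \<longrightarrow> act (\<pi> \<circ> \<sigma>) x = act \<pi> (act \<sigma> x))"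

definition supports :: "((atom \<Rightarrow> atom) \<Rightarrow> 'x \<Rightarrow> 'x) \<Rightarrow> atom set \<Rightarrow> 'x \<Rightarrow> bool" where
  "supports act S x \<longleftrightarrow> (\<forall>\<pi>. fsperm \<pi> \<and> (\<forall>a\<in>S. \<pi> a = a) \<longrightarrow> act \<pi> x = x)"

definition nominal_set :: "'x set \<Rightarrow> ((atom \<Rightarrow> atom) \<Rightarrow> 'x \<Rightarrow> 'x) \<Rightarrow> bool" where
  "nominal_set X act \<longleftrightarrow> perm_set X act \<and> (\<forall>x\<in>X. \<exists>S. finite S \<and> supports act S x)"

text \<open>Pointwise action on subsets; a subset is finitely supported if it has a finite
  support for this action (i.e. it is an element of the power object).\<close>
definition set_act :: "((atom \<Rightarrow> atom) \<Rightarrow> 'x \<Rightarrow> 'x) \<Rightarrow> (atom \<Rightarrow> atom) \<Rightarrow> 'x set \<Rightarrow> 'x set" where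
  "set_act act \<pi> A = act \<pi> ` A"

definition fs_subset :: "((atom \<Rightarrow> atom) \<Rightarrow> 'x \<Rightarrow> 'x) \<Rightarrow> 'x set \<Rightarrow> bool" where
  "fs_subset act A \<longleftrightarrow> (\<exists>S. finite S \<and> supports (set_act act) S A)"

text \<open>A letter is a pair (x, b); b = True means the inverse letter x^-1.\<close>

fun reduced :: "('x \<times> bool) list \<Rightarrow> bool" where
  "reduced [] = True"
| "reduced [_] = True"
| "reduced ((x,b) # (y,c) # w) = (\<not> (x = y \<and> b \<noteq> c) \<and> reduced ((y,c) # w))"

fun cancel_cons :: "('x \<times> bool) \<Rightarrow> ('x \<times> bool) list \<Rightarrow> ('x \<times> bool) list" where
  "cancel_cons l [] = [l]"
| "cancel_cons (x,b) ((y,c) # w) = (if x = y \<and> b \<noteq> c then w else (x,b) # (y,c) # w)"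

definition reduce :: "('x \<times> bool) list \<Rightarrow> ('x \<times> bool) list" where
  "reduce w = foldr cancel_cons w []"

definition free_group :: "'x set \<Rightarrow> ('x \<times> bool) list monoid" where
  "free_group X = \<lparr> carrier = {w. (\<forall>(x,b)\<in>set w. x \<in> X) \<and> reduced w},
                    mult = (\<lambda>v w. reduce (v @ w)),
                    one = [] \<rparr>"

definition eval_word :: "('g, 'm) monoid_scheme \<Rightarrow> ('g \<times> bool) list \<Rightarrow> 'g" where
  "eval_word G w = foldr (\<lambda>(x,b) r. (if b then inv\<^bsub>G\<^esub> x else x) \<otimes>\<^bsub>G\<^esub> r) w \<one>\<^bsub>G\<^esub>"

definition freely_generates :: "('g, 'm) monoid_scheme \<Rightarrow> 'g set \<Rightarrow> 'g set \<Rightarrow> bool" where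
  "freely_generates G H S \<longleftrightarrow>
     S \<subseteq> H \<and> eval_word G \<in> iso (free_group S) (G\<lparr>carrier := H\<rparr>)"

definition word_act :: "((atom \<Rightarrow> atom) \<Rightarrow> 'x \<Rightarrow> 'x) \<Rightarrow> (atom \<Rightarrow> atom) \<Rightarrow> ('x \<times> bool) list \<Rightarrow> ('x \<times> bool) list" where
  "word_act act \<pi> w = map (\<lambda>(x,b). (act \<pi> x, b)) w"

end

theory Submission
  imports Defs "HOL-Library.Nat_Bijection"
begin


definition canc :: "('x \<times> bool) \<Rightarrow> ('x \<times> bool) \<Rightarrow> bool" where
  "canc l m \<longleftrightarrow> fst l = fst m \<and> snd l \<noteq> snd m"

definition flp :: "('x \<times> bool) \<Rightarrow> ('x \<times> bool)" where
  "flp l = (fst l, \<not> snd l)"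

definition invw :: "('x \<times> bool) list \<Rightarrow> ('x \<times> bool) list" where
  "invw w = rev (map flp w)"

lemma reduced_Cons: "reduced (a # ys) \<longleftrightarrow> reduced ys \<and> (ys = [] \<or> \<not> canc a (hd ys))"
  by (cases a; cases ys) (auto simp: canc_def)

lemma reduced_append: "reduced (xs @ ys) \<longleftrightarrow> reduced xs \<and> reduced ys \<and> (xs = [] \<or> ys = [] \<or> \<not> canc (last xs) (hd ys))"
  by (induction xs) (auto simp: reduced_Cons)

lemma cc_eq: "cancel_cons l w = (if w \<noteq> [] \<and> canc l (hd w) then tl w else l # w)"
  by (cases l; cases w) (auto simp: canc_def)

lemma cc_reduced: "reduced w \<Longrightarrow> reduced (cancel_cons l w)"
  by (cases w) (auto simp: cc_eq reduced_Cons)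

lemma foldr_reduced: "reduced q \<Longrightarrow> reduced (foldr cancel_cons r q)"
  by (induction r) (auto simp: cc_reduced)

lemma reduced_reduce: "reduced (reduce w)"
  unfolding reduce_def by (rule foldr_reduced) simp

lemma reduce_Cons: "reduce (l # w) = cancel_cons l (reduce w)"
  by (simp add: reduce_def)

lemma reduce_append: "reduce (x @ y) = foldr cancel_cons x (reduce y)"
  by (simp add: reduce_def)

lemma reduce_reduced: "reduced w \<Longrightarrow> reduce w = w"
  by (induction w) (auto simp: reduce_Cons reduced_Cons cc_eq reduce_def)

lemma canc_flp: "canc l (flp l)" "canc (flp l) l"
  by (auto simp: canc_def flp_def)

lemma cc_cc: "reduced q \<Longrightarrow> cancel_cons l (cancel_cons (flp l) q) = q"
  by (cases l; cases q) (auto simp: cc_eq canc_def flp_def reduced_Cons)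

lemma canc_inv: "canc l m \<Longrightarrow> m = flp l"
  by (cases l; cases m) (auto simp: canc_def flp_def)

lemma foldr_cc_cc: "reduced q \<Longrightarrow> foldr cancel_cons (cancel_cons l r) q = cancel_cons l (foldr cancel_cons r q)"
proof (cases "r \<noteq> [] \<and> canc l (hd r)")
  case True
  assume q: "reduced q"
  then obtain r' where r: "r = flp l # r'" using True canc_inv[of l "hd r"] by (cases r) auto
  have "cancel_cons l (foldr cancel_cons r q) = cancel_cons l (cancel_cons (flp l) (foldr cancel_cons r' q))"
    by (simp add: r)
  also have "\<dots> = foldr cancel_cons r' q" by (rule cc_cc[OF foldr_reduced[OF q]])
  finally show ?thesis using True by (simp add: cc_eq r)
next
  case False
  then have "cancel_cons l r = l # r" unfolding cc_eq by auto
  then show ?thesis by simp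
qed

lemma foldr_reduce: "reduced q \<Longrightarrow> foldr cancel_cons (reduce x) q = foldr cancel_cons x q"
  by (induction x) (auto simp: reduce_Cons foldr_cc_cc reduce_def)

lemma reduce_reduce_left: "reduce (reduce x @ y) = reduce (x @ y)"
  by (simp add: reduce_append foldr_reduce reduced_reduce)

lemma reduce_reduce_right: "reduce (x @ reduce y) = reduce (x @ y)"
  by (simp add: reduce_append reduce_reduced reduced_reduce)

lemma set_cc: "set (cancel_cons l w) \<subseteq> insert l (set w)"
  by (cases w) (auto simp: cc_eq dest: list.set_sel(2))

lemma set_reduce: "set (reduce w) \<subseteq> set w"
proof (induction w)
  case Nil
  then show ?case by (simp add: reduce_def)
next
  case (Cons a w)
  then show ?case using set_cc[of a "reduce w"] by (auto simp: reduce_Cons)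
qed

lemma reduce_invw: "reduce (w @ invw w) = []"
proof (induction w)
  case Nil
  then show ?case by (simp add: invw_def reduce_def)
next
  case (Cons l w)
  have "reduce ((l # w) @ invw (l # w)) = reduce ([l] @ (w @ invw w) @ [flp l])"
    by (simp add: invw_def)
  also have "\<dots> = reduce ([l] @ reduce ((w @ invw w) @ [flp l]))"
    by (simp only: reduce_reduce_right)
  also have "\<dots> = reduce ([l] @ reduce (reduce (w @ invw w) @ [flp l]))"
    by (simp only: reduce_reduce_left)
  also have "\<dots> = reduce [l, flp l]"
    by (simp only: Cons) (simp add: reduce_def)
  also have "\<dots> = []" by (simp add: reduce_def cc_eq canc_flp)
  finally show ?case .
qed

lemma invw_invw[simp]: "invw (invw w) = w"
  by (simp add: invw_def rev_map flp_def comp_def)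

lemma flp_flp[simp]: "flp (flp l) = l" by (simp add: flp_def)

lemma canc_flp_iff: "canc (flp l) (flp m) = canc l m" "canc l m = canc m l"
  by (auto simp: canc_def flp_def)

lemma reduced_invw: "reduced w \<Longrightarrow> reduced (invw w)"
proof (induction w)
  case Nil
  then show ?case by (simp add: invw_def)
next
  case (Cons l w)
  then have "reduced w" by (simp add: reduced_Cons)
  then show ?case using Cons
    by (cases w) (auto simp: invw_def reduced_append reduced_Cons canc_flp_iff)
qed

lemma set_invw: "(x, b) \<in> set (invw w) \<Longrightarrow> \<exists>c. (x, c) \<in> set w"
  by (auto simp: invw_def flp_def)

lemma fg_carrier: "w \<in> carrier (free_group A) \<longleftrightarrow> (\<forall>(x,b)\<in>set w. x \<in> A) \<and> reduced w"
  by (simp add: free_group_def)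

lemma fg_mult: "x \<otimes>\<^bsub>free_group A\<^esub> y = reduce (x @ y)"
  by (simp add: free_group_def)

lemma fg_one: "\<one>\<^bsub>free_group A\<^esub> = []"
  by (simp add: free_group_def)

lemma reduce_closed: "\<forall>(x,b)\<in>set w. x \<in> A \<Longrightarrow> reduce w \<in> carrier (free_group A)"
  using set_reduce[of w] by (auto simp: fg_carrier reduced_reduce)

lemma invw_closed: "w \<in> carrier (free_group A) \<Longrightarrow> invw w \<in> carrier (free_group A)"
  by (auto simp: fg_carrier reduced_invw dest!: set_invw)

lemma group_fg: "group (free_group A)"
proof (rule groupI)
  fix x y assume "x \<in> carrier (free_group A)" "y \<in> carrier (free_group A)"
  then show "x \<otimes>\<^bsub>free_group A\<^esub> y \<in> carrier (free_group A)"
    unfolding fg_mult by (intro reduce_closed) (auto simp: fg_carrier)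
next
  show "\<one>\<^bsub>free_group A\<^esub> \<in> carrier (free_group A)" by (simp add: fg_one fg_carrier)
next
  fix x y z
  show "(x \<otimes>\<^bsub>free_group A\<^esub> y) \<otimes>\<^bsub>free_group A\<^esub> z = x \<otimes>\<^bsub>free_group A\<^esub> (y \<otimes>\<^bsub>free_group A\<^esub> z)"
    by (simp add: fg_mult reduce_reduce_left reduce_reduce_right)
next
  fix x assume "x \<in> carrier (free_group A)"
  then show "\<one>\<^bsub>free_group A\<^esub> \<otimes>\<^bsub>free_group A\<^esub> x = x"
    by (simp add: fg_mult fg_one fg_carrier reduce_reduced)
next
  fix x assume x: "x \<in> carrier (free_group A)"
  show "\<exists>y\<in>carrier (free_group A). y \<otimes>\<^bsub>free_group A\<^esub> x = \<one>\<^bsub>free_group A\<^esub>"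
    using reduce_invw[of "invw x"] invw_closed[OF x] by (auto simp: fg_mult fg_one)
qed

lemma fg_inv: "x \<in> carrier (free_group A) \<Longrightarrow> inv\<^bsub>free_group A\<^esub> x = invw x"
proof -
  assume x: "x \<in> carrier (free_group A)"
  show ?thesis
    by (rule group.inv_equality[OF group_fg])
      (use x invw_closed[OF x] reduce_invw[of "invw x"] in \<open>auto simp: fg_mult fg_one\<close>)
qed



definition expsum :: "'x \<Rightarrow> ('x \<times> bool) list \<Rightarrow> int" where
  "expsum x w = sum_list (map (\<lambda>l. if fst l = x then (if snd l then -1 else 1) else 0) w)"

lemma expsum_Nil[simp]: "expsum x [] = 0" by (simp add: expsum_def)
lemma expsum_append[simp]: "expsum x (u @ v) = expsum x u + expsum x v" by (simp add: expsum_def)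
lemma expsum_Cons: "expsum x (l # v) = expsum x [l] + expsum x v" by (simp add: expsum_def)

lemma expsum_cc: "expsum x (cancel_cons l w) = expsum x [l] + expsum x w"
proof (cases "w \<noteq> [] \<and> canc l (hd w)")
  case True
  then obtain w' where w: "w = flp l # w'" using canc_inv[of l "hd w"] by (cases w) auto
  show ?thesis using True
    by (simp add: cc_eq w expsum_def flp_def)
next
  case False
  then have "cancel_cons l w = l # w" unfolding cc_eq by auto
  then show ?thesis by (simp add: expsum_Cons[of x l w])
qed

lemma expsum_reduce[simp]: "expsum x (reduce w) = expsum x w"
proof (induction w)
  case Nil
  then show ?case by (simp add: reduce_def)
next
  case (Cons l w)
  then show ?case by (simp add: reduce_Cons expsum_cc expsum_Cons[of x l w])
qed

lemma expsum_invw[simp]: "expsum x (invw w) = - expsum x w"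
  by (induction w) (auto simp: invw_def expsum_def flp_def)

definition mf :: "('x \<Rightarrow> 'y) \<Rightarrow> ('x \<times> bool) \<Rightarrow> ('y \<times> bool)" where
  "mf g l = (g (fst l), snd l)"

lemma word_act_mf: "word_act act \<pi> w = map (mf (act \<pi>)) w"
  by (simp add: word_act_def mf_def case_prod_beta')

lemma expsum_map: "inj g \<Longrightarrow> expsum (g x) (map (mf g) w) = expsum x w"
  by (induction w) (auto simp: expsum_def mf_def inj_eq)

lemma canc_mf: "inj g \<Longrightarrow> canc (mf g l) (mf g m) = canc l m"
  by (auto simp: canc_def mf_def inj_eq)

lemma map_cc: "inj g \<Longrightarrow> map (mf g) (cancel_cons l w) = cancel_cons (mf g l) (map (mf g) w)"
  by (cases w) (auto simp: cc_eq canc_mf hd_map)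

lemma map_reduce: "inj g \<Longrightarrow> map (mf g) (reduce w) = reduce (map (mf g) w)"
proof (induction w)
  case Nil
  then show ?case by (simp add: reduce_def)
next
  case (Cons l w)
  then show ?case by (simp add: reduce_Cons map_cc)
qed

lemma reduced_map: "inj g \<Longrightarrow> reduced (map (mf g) w) = reduced w"
  by (induction w) (auto simp: reduced_Cons canc_mf hd_map)

lemma map_invw: "map (mf g) (invw w) = invw (map (mf g) w)"
  by (simp add: invw_def rev_map mf_def flp_def comp_def)

definition Pw :: "('x \<Rightarrow> int) \<Rightarrow> ('x \<times> bool) list \<Rightarrow> int" where
  "Pw p w = sum_list (map (\<lambda>l. if snd l then - p (fst l) else p (fst l)) w)"

lemma Pw_append[simp]: "Pw p (u @ v) = Pw p u + Pw p v" by (simp add: Pw_def)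

lemma Pw_invw: "Pw p (invw w) = - Pw p w"
  by (induction w) (auto simp: invw_def Pw_def flp_def)

lemma Pw_map: "\<forall>l\<in>set w. p (f (fst l)) = - p (fst l) \<Longrightarrow> Pw p (map (mf f) w) = - Pw p w"
  by (induction w) (auto simp: Pw_def mf_def)

lemma parity:
  assumes eq: "map (mf f) w = invw w" and anti: "\<forall>l\<in>set w. p (f (fst l)) = - p (fst l)"
  shows "\<exists>k. Pw p w = 2 * k"
proof (cases "even (length w)")
  case False
  define n where "n = length w"
  define k where "k = n div 2"
  have kn: "k < n" "n - Suc k = k" using False by (auto simp: n_def k_def elim!: oddE)
  have "(map (mf f) w) ! k = (invw w) ! k" using eq by simp
  then have "snd (w ! k) = (\<not> snd (w ! (n - Suc k)))"
    using kn by (simp add: invw_def mf_def flp_def rev_nth n_def)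
  then show ?thesis using kn by simp
next
  case True
  define n where "n = length w"
  define k where "k = n div 2"
  have nk: "n - k = k" using True by (auto simp: n_def k_def)
  have "take k (map (mf f) w) = take k (invw w)" using eq by simp
  then have "map (mf f) (take k w) = invw (drop k w)"
    by (simp add: invw_def take_map take_rev drop_map nk[unfolded n_def])
  then have "Pw p (map (mf f) (take k w)) = Pw p (invw (drop k w))" by simp
  moreover have "Pw p (map (mf f) (take k w)) = - Pw p (take k w)"
    by (rule Pw_map) (use anti in \<open>auto dest: in_set_takeD\<close>)
  ultimately have "Pw p (drop k w) = Pw p (take k w)" by (simp add: Pw_invw)
  moreover have "Pw p w = Pw p (take k w) + Pw p (drop k w)"
    by (metis Pw_append append_take_drop_id)
  ultimately show ?thesis by auto
qed



definition lval :: "('g, 'm) monoid_scheme \<Rightarrow> ('g \<times> bool) \<Rightarrow> 'g" where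
  "lval G l = (if snd l then inv\<^bsub>G\<^esub> (fst l) else fst l)"

lemma eval_Nil[simp]: "eval_word G [] = \<one>\<^bsub>G\<^esub>" by (simp add: eval_word_def)
lemma eval_Cons: "eval_word G (l # w) = lval G l \<otimes>\<^bsub>G\<^esub> eval_word G w"
  by (simp add: eval_word_def lval_def case_prod_beta')

lemma lval_closed: "group G \<Longrightarrow> fst l \<in> carrier G \<Longrightarrow> lval G l \<in> carrier G"
  by (simp add: lval_def group.inv_closed)

lemma eval_closed: "group G \<Longrightarrow> \<forall>l\<in>set w. fst l \<in> carrier G \<Longrightarrow> eval_word G w \<in> carrier G"
  by (induction w) (auto simp: eval_Cons lval_closed group.is_monoid monoid.m_closed)

lemma eval_append: "group G \<Longrightarrow> \<forall>l\<in>set u. fst l \<in> carrier G \<Longrightarrow> \<forall>l\<in>set v. fst l \<in> carrier G \<Longrightarrow>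
   eval_word G (u @ v) = eval_word G u \<otimes>\<^bsub>G\<^esub> eval_word G v"
proof (induction u)
  case Nil
  then show ?case by (simp add: eval_closed group.is_monoid monoid.l_one)
next
  case (Cons l u)
  then show ?case
    by (simp add: eval_Cons monoid.m_assoc group.is_monoid lval_closed eval_closed)
qed

lemma eval_invw: "group G \<Longrightarrow> \<forall>l\<in>set w. fst l \<in> carrier G \<Longrightarrow>
   eval_word G (invw w) = inv\<^bsub>G\<^esub> (eval_word G w)"
proof (induction w)
  case Nil
  then show ?case by (simp add: invw_def monoid.inv_one group.is_monoid)
next
  case (Cons l w)
  have lv: "lval G (flp l) = inv\<^bsub>G\<^esub> (lval G l)"
    using Cons.prems by (auto simp: lval_def flp_def group.inv_inv)
  have "eval_word G (invw (l # w)) = eval_word G (invw w @ [flp l])"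
    by (simp add: invw_def)
  also have "\<dots> = eval_word G (invw w) \<otimes>\<^bsub>G\<^esub> eval_word G [flp l]"
    using Cons.prems by (intro eval_append) (auto simp: invw_def flp_def)
  also have "\<dots> = inv\<^bsub>G\<^esub> (eval_word G w) \<otimes>\<^bsub>G\<^esub> inv\<^bsub>G\<^esub> (lval G l)"
    using Cons by (simp add: eval_Cons lv group.is_monoid monoid.r_one lval_closed group.inv_closed)
  also have "\<dots> = inv\<^bsub>G\<^esub> (eval_word G (l # w))"
    using Cons.prems by (simp add: eval_Cons group.inv_mult_group lval_closed eval_closed)
  finally show ?case .
qed

lemma eval_expsum:
  assumes "\<forall>l\<in>set w. fst l \<in> carrier (free_group A)"
  shows "expsum x (eval_word (free_group A) w) = Pw (expsum x) w"
  using assms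
proof (induction w)
  case Nil
  then show ?case by (simp add: Pw_def fg_one)
next
  case (Cons l w)
  have "expsum x (lval (free_group A) l) = (if snd l then - expsum x (fst l) else expsum x (fst l))"
    using Cons.prems by (simp add: lval_def fg_inv)
  then show ?case using Cons by (simp add: eval_Cons fg_mult Pw_def)
qed

lemma fg_act_mult: "inj g \<Longrightarrow> map (mf g) (x \<otimes>\<^bsub>free_group A\<^esub> y) =
    map (mf g) x \<otimes>\<^bsub>free_group B\<^esub> map (mf g) y"
  by (simp add: fg_mult map_reduce)

lemma map_carrier: "inj g \<Longrightarrow> w \<in> carrier (free_group UNIV) \<Longrightarrow> map (mf g) w \<in> carrier (free_group UNIV)"
  by (simp add: fg_carrier reduced_map)

lemma eval_act:
  assumes g: "inj g" and w: "\<forall>l\<in>set w. fst l \<in> carrier (free_group UNIV)"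
  shows "map (mf g) (eval_word (free_group UNIV) w) =
         eval_word (free_group UNIV) (map (mf (map (mf g))) w)"
  using w
proof (induction w)
  case Nil
  then show ?case by (simp add: fg_one)
next
  case (Cons l w)
  have "map (mf g) (lval (free_group UNIV) l) = lval (free_group UNIV) (mf (map (mf g)) l)"
    using Cons.prems g by (simp add: lval_def fg_inv mf_def map_invw map_carrier)
  then show ?case using Cons g by (simp add: eval_Cons fg_mult map_reduce[OF g])
qed



definition pact :: "(atom \<Rightarrow> atom) \<Rightarrow> nat \<Rightarrow> nat" where
  "pact \<pi> n = prod_encode (\<pi> (fst (prod_decode n)), \<pi> (snd (prod_decode n)))"

definition swn :: "nat \<Rightarrow> nat" where
  "swn n = prod_encode (snd (prod_decode n), fst (prod_decode n))"

definition HH :: "(nat \<times> bool) list set" where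
  "HH = {w \<in> carrier (free_group UNIV). \<forall>x. expsum x w + expsum (swn x) w = 0}"

lemma pact_enc[simp]: "pact \<pi> (prod_encode (a, b)) = prod_encode (\<pi> a, \<pi> b)"
  by (simp add: pact_def)

lemma swn_enc[simp]: "swn (prod_encode (a, b)) = prod_encode (b, a)"
  by (simp add: swn_def)

lemma pact_comp: "pact \<pi> (pact \<sigma> n) = pact (\<pi> \<circ> \<sigma>) n"
  by (simp add: pact_def)

lemma inj_pact: "inj \<pi> \<Longrightarrow> inj (pact \<pi>)"
  unfolding inj_def pact_def
  by (metis prod.collapse prod_decode_inverse prod_encode_eq prod.inject)

lemma pact_swn: "pact \<pi> (swn x) = swn (pact \<pi> x)"
  by (simp add: pact_def swn_def)

lemma surj_pact: "surj \<pi> \<Longrightarrow> surj (pact \<pi>)"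
proof -
  assume s: "surj \<pi>"
  show ?thesis
  proof (rule surjI)
    fix n
    show "pact \<pi> (pact (inv_into UNIV \<pi>) n) = n"
      by (simp add: pact_def surj_f_inv_f[OF s])
  qed
qed

lemma nominal_pact: "nominal_set UNIV pact"
  unfolding nominal_set_def perm_set_def
proof (intro conjI ballI allI impI)
  fix x :: nat show "pact id x = x" by (simp add: pact_def)
next
  fix \<pi> \<sigma> x show "pact (\<pi> \<circ> \<sigma>) x = pact \<pi> (pact \<sigma> x)" by (simp add: pact_comp)
next
  fix x :: nat
  show "\<exists>S. finite S \<and> supports pact S x"
    by (rule exI[of _ "{fst (prod_decode x), snd (prod_decode x)}"]) (simp add: supports_def pact_def)
qed simp

lemma subgroup_HH: "subgroup HH (free_group UNIV)"
proof (rule group.subgroupI[OF group_fg])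
  show "HH \<subseteq> carrier (free_group UNIV)" by (auto simp: HH_def)
  have "[] \<in> HH" by (simp add: HH_def fg_carrier)
  then show "HH \<noteq> {}" by blast
next
  fix a assume a: "a \<in> HH"
  then have ac: "a \<in> carrier (free_group UNIV)" by (simp add: HH_def)
  have "\<forall>x. expsum x (invw a) + expsum (swn x) (invw a) = 0"
  proof
    fix x
    have "expsum x a + expsum (swn x) a = 0" using a by (simp add: HH_def)
    then show "expsum x (invw a) + expsum (swn x) (invw a) = 0" by (simp only: expsum_invw)
  qed
  then have "invw a \<in> HH" using invw_closed[OF ac] unfolding HH_def by blast
  then show "inv\<^bsub>free_group UNIV\<^esub> a \<in> HH"
    using ac by (simp add: fg_inv)
next
  fix a b assume a: "a \<in> HH" and b: "b \<in> HH"
  have "expsum x (a @ b) + expsum (swn x) (a @ b) = 0" for x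
  proof -
    have "expsum x a + expsum (swn x) a = 0" "expsum x b + expsum (swn x) b = 0"
      using a b by (simp_all add: HH_def)
    then show ?thesis by simp
  qed
  moreover have "reduce (a @ b) \<in> carrier (free_group UNIV)"
    by (rule reduce_closed) simp
  ultimately show "a \<otimes>\<^bsub>free_group UNIV\<^esub> b \<in> HH"
    by (simp add: HH_def fg_mult)
qed

lemma HH_act: assumes "bij \<pi>" "w \<in> HH" shows "word_act pact \<pi> w \<in> HH"
proof -
  have i: "inj (pact \<pi>)" using assms(1) by (simp add: bij_is_inj inj_pact)
  have s: "surj (pact \<pi>)" using assms(1) by (simp add: bij_is_surj surj_pact)
  have c: "map (mf (pact \<pi>)) w \<in> carrier (free_group UNIV)"
    using assms(2) i by (auto simp: HH_def map_carrier)
  have "expsum x (map (mf (pact \<pi>)) w) + expsum (swn x) (map (mf (pact \<pi>)) w) = 0" for x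
  proof -
    obtain z where z: "x = pact \<pi> z" using s by blast
    have "swn x = pact \<pi> (swn z)" by (simp add: z pact_swn)
    then show ?thesis using assms(2) z by (simp add: expsum_map[OF i] HH_def)
  qed
  then show ?thesis using c by (simp add: HH_def word_act_mf)
qed

lemma fsperm_inv: "fsperm \<pi> \<Longrightarrow> bij (inv_into UNIV \<pi>)"
  by (simp add: fsperm_def bij_imp_bij_inv)

lemma fs_HH: "fs_subset (word_act pact) HH"
  unfolding fs_subset_def
proof (intro exI conjI)
  show "finite {}" by simp
  show "supports (set_act (word_act pact)) {} HH"
    unfolding supports_def set_act_def
  proof (intro allI impI)
    fix \<pi> assume p: "fsperm \<pi> \<and> (\<forall>a\<in>{}. \<pi> a = a)"
    then have b: "bij \<pi>" by (simp add: fsperm_def)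
    have bi: "bij (inv_into UNIV \<pi>)" using p fsperm_inv by blast
    show "word_act pact \<pi> ` HH = HH"
    proof
      show "word_act pact \<pi> ` HH \<subseteq> HH" using HH_act b by blast
      show "HH \<subseteq> word_act pact \<pi> ` HH"
      proof
        fix w assume w: "w \<in> HH"
        have "word_act pact \<pi> (word_act pact (inv_into UNIV \<pi>) w) = w"
          unfolding word_act_def map_map
          by (rule map_idI) (auto simp: pact_def surj_f_inv_f[OF bij_is_surj[OF b]])
        then show "w \<in> word_act pact \<pi> ` HH" using HH_act[OF bi w] by (metis imageI)
      qed
    qed
  qed
qed



theorem theorem6p3:
  shows "\<not> (\<forall>(A :: nat set) act. nominal_set A act \<longrightarrow>
            (\<forall>H. subgroup H (free_group A) \<and> fs_subset (word_act act) H \<longrightarrow>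
               (\<exists>S. S \<subseteq> H \<and> fs_subset (word_act act) S \<and>
                    freely_generates (free_group A) H S)))"
proof
  assume hyp: "\<forall>(A :: nat set) act. nominal_set A act \<longrightarrow>
            (\<forall>H. subgroup H (free_group A) \<and> fs_subset (word_act act) H \<longrightarrow>
               (\<exists>S. S \<subseteq> H \<and> fs_subset (word_act act) S \<and>
                    freely_generates (free_group A) H S))"
  have "\<exists>S. S \<subseteq> HH \<and> fs_subset (word_act pact) S \<and> freely_generates (free_group UNIV) HH S"
    using hyp nominal_pact subgroup_HH fs_HH by blast
  then obtain S where SH: "S \<subseteq> HH" and fsS: "fs_subset (word_act pact) S"
    and fg: "freely_generates (free_group UNIV) HH S" by blast
  from fsS obtain T where T: "finite T" "supports (set_act (word_act pact)) T S"
    unfolding fs_subset_def by blast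
  obtain a :: nat where a: "a \<notin> T" using T(1) by (meson ex_new_if_finite infinite_UNIV_nat)
  have "finite (insert a T)" using T(1) by simp
  then obtain b :: nat where b: "b \<notin> insert a T" by (meson ex_new_if_finite infinite_UNIV_nat)
  define \<tau> where "\<tau> = (\<lambda>x::nat. if x = a then b else if x = b then a else x)"
  have ttid: "\<tau> \<circ> \<tau> = id" by (auto simp: \<tau>_def)
  have bt: "bij \<tau>" by (rule o_bij[OF ttid ttid])
  have "{x. \<tau> x \<noteq> x} \<subseteq> {a, b}" by (auto simp: \<tau>_def)
  then have fst: "fsperm \<tau>" using bt by (auto simp: fsperm_def intro: finite_subset)
  have tT: "\<forall>x\<in>T. \<tau> x = x" using a b by (auto simp: \<tau>_def)
  have SS: "word_act pact \<tau> ` S = S" using T(2) fst tT unfolding supports_def set_act_def by blast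
  have ip: "inj (pact \<tau>)" using bt by (simp add: bij_is_inj inj_pact)
  define G where "G = free_group (UNIV::nat set)"
  define wt where "wt = word_act pact \<tau>"
  have wt_mf: "wt = map (mf (pact \<tau>))" by (simp add: wt_def word_act_mf[abs_def])
  define x0 where "x0 = prod_encode (a, b)"
  have ab: "a \<noteq> b" using b by auto
  have x0s: "swn x0 \<noteq> x0" using ab by (simp add: x0_def)
  define y where "y = [(x0, False), (swn x0, True)]"
  have yc: "y \<in> carrier G" using x0s by (simp add: y_def G_def fg_carrier)
  have "expsum x y + expsum (swn x) y = 0" for x
  proof -
    have sw: "swn (swn z) = z" for z by (simp add: swn_def)
    then show ?thesis using x0s by (auto simp: y_def expsum_def) (metis sw)+
  qed
  then have yH: "y \<in> HH" using yc by (simp add: HH_def G_def)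
  have ey: "expsum x0 y = 1" using x0s by (simp add: y_def expsum_def)
  have tx0: "pact \<tau> x0 = swn x0" "pact \<tau> (swn x0) = x0" by (auto simp: x0_def \<tau>_def)
  have wty: "wt y = invw y" by (simp add: wt_mf y_def mf_def tx0 invw_def flp_def)
  have p_anti: "expsum x0 (wt h) = - expsum x0 h" if h: "h \<in> HH" for h
  proof -
    have "expsum x0 (wt h) = expsum (pact \<tau> (swn x0)) (map (mf (pact \<tau>)) h)"
      by (simp add: wt_mf tx0)
    also have "\<dots> = expsum (swn x0) h" by (rule expsum_map[OF ip])
    also have "\<dots> = - expsum x0 h" using h by (simp add: HH_def eq_neg_iff_add_eq_0 add.commute)
    finally show ?thesis .
  qed
  from fg have bij: "bij_betw (eval_word G) (carrier (free_group S)) HH"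
    unfolding freely_generates_def iso_def G_def by auto
  then obtain w where w: "w \<in> carrier (free_group S)" "eval_word G w = y"
    using yH bij_betw_imp_surj_on[OF bij] by (metis imageE)
  have SG: "S \<subseteq> carrier G" using SH by (auto simp: HH_def G_def)
  have wl: "\<forall>l\<in>set w. fst l \<in> S" using w(1) by (auto simp: fg_carrier)
  then have wlG: "\<forall>l\<in>set w. fst l \<in> carrier G" using SG by blast
  define wm where "wm = map (mf wt) w"
  have wtS: "wt s \<in> S" if "s \<in> S" for s using SS that wt_def by blast
  have iwt: "inj wt" unfolding wt_mf
  proof (rule list.inj_map)
    show "inj (mf (pact \<tau>))" using ip by (auto simp: inj_def mf_def prod_eq_iff)
  qed
  have wm_c: "wm \<in> carrier (free_group S)"
    using w(1) wtS iwt by (auto simp: wm_def fg_carrier reduced_map mf_def)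
  have wi_c: "invw w \<in> carrier (free_group S)" using w(1) by (rule invw_closed)
  have "eval_word G wm = wt (eval_word G w)"
    unfolding wm_def G_def wt_mf using eval_act[OF ip] wlG by (simp add: G_def)
  also have "\<dots> = inv\<^bsub>G\<^esub> (eval_word G w)" using w(2) wty yc by (simp add: G_def fg_inv)
  also have "\<dots> = eval_word G (invw w)"
    using eval_invw[OF group_fg wlG[unfolded G_def]] by (simp add: G_def)
  finally have "eval_word G wm = eval_word G (invw w)" .
  then have eqw: "map (mf wt) w = invw w"
    using bij wm_c wi_c unfolding wm_def bij_betw_def inj_on_def by blast
  have anti: "\<forall>l\<in>set w. expsum x0 (wt (fst l)) = - expsum x0 (fst l)"
    using wl SH p_anti by blast
  obtain k where k: "Pw (expsum x0) w = 2 * k" using parity[OF eqw anti] by blast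
  have "expsum x0 (eval_word G w) = Pw (expsum x0) w"
    unfolding G_def by (rule eval_expsum) (use wlG in \<open>simp add: G_def\<close>)
  then have "1 = 2 * k" using w(2) ey k by simp
  then show False by presburger
qed

end
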